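(* Assume (a) and (b). Then the minimizer of the optimization problem $$\min_{\beta\in\mathbb{R}}\;\lambda\int f^{*}\!\Big(-\frac{\beta+L_z(\theta)}{\lambda}\Big)\,dQ(\theta)+\beta$$ is $N_{Q,z}(\lambda)$.
   Context: Setting. - $\mathcal{M}\subseteq\mathbb{R}^d$; $h:\mathcal{M}\times\mathcal{X}\to\mathcal{Y}$; the loss $\ell:\mathcal{Y}\times\mathcal{Y}\to[0,\infty)$ satisfies $\ell(y,y)=0$. - For a dataset $z=((x_1,y_1),\dots,(x_n,y_n))$, $L_z(\theta)=\frac1n\sum_i\ell(h(\theta,x_i),y_i)$. - $Q$ is a Borel probability measure on $\mathcal{M}$, and $\lambda>0$. - $f:[0,\infty)\to\mathbb{R}$ is convex with $f(1)=0$ and $f(0)=\lim_{x\to0^+}f(x)$. - $\dot f$ is the derivative of $f$ on $(0,\infty)$ and $\dot f^{-1}$ its inverse function. Legendre–Fenchel transform. $f^*(t)=\sup_{x}(tx-f(x))$ (supremum over the domain of $f$), defined on $\mathcal{J}=\{t\in\mathbb{R}:f^*(t)<\infty\}$. Assumptions. - (a) $f$ is strictly convex and differentiable. - (b) There exists $\beta\in\mathbb{R}$ such that $\dot f^{-1}\big(-\frac{\beta+L_z(\theta)}{\lambda}\big)>0$ for all $\theta\in\operatorname{supp}Q$ and $\int\dot f^{-1}\big(-\frac{\beta+L_z(\theta)}{\lambda}\big)dQ(\theta)=1$. Normalization function. Let $\mathcal{A}_{Q,z}\subseteq(0,\infty)$ be the set of $\lambda$ for which (b) holds. The normalization function $N_{Q,z}:\mathcal{A}_{Q,z}\to\mathbb{R}$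 is defined by $$\int\dot f^{-1}\Big(-\frac{N_{Q,z}(\lambda)+L_z(\theta)}{\lambda}\Big)dQ(\theta)=1.$$ That is, $N_{Q,z}(\lambda)$ is the value $\beta$ of assumption (b). *)

theory Defs
  imports "HOL-Analysis.Analysis" "HOL-Probability.Probability"
begin

definition emp_risk :: "('y \<Rightarrow> 'y \<Rightarrow> real) \<Rightarrow> ('a \<Rightarrow> 'x \<Rightarrow> 'y) \<Rightarrow> ('x \<times> 'y) list \<Rightarrow> 'a \<Rightarrow> real" where
  "emp_risk loss h z \<theta> = (1 / real (length z)) * (\<Sum>i<length z. loss (h \<theta> (fst (z ! i))) (snd (z ! i)))"

definition strictly_convex_on :: "real set \<Rightarrow> (real \<Rightarrow> real) \<Rightarrow> bool" where
  "strictly_convex_on S f \<longleftrightarrow>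
     (\<forall>x\<in>S. \<forall>y\<in>S. x \<noteq> y \<longrightarrow> (\<forall>u. 0 < u \<and> u < 1 \<longrightarrow>
        f (u * x + (1 - u) * y) < u * f x + (1 - u) * f y))"

definition fdot :: "(real \<Rightarrow> real) \<Rightarrow> real \<Rightarrow> real" where
  "fdot f = deriv f"

definition fdot_inv :: "(real \<Rightarrow> real) \<Rightarrow> real \<Rightarrow> real" where
  "fdot_inv f = inv_into {0<..} (fdot f)"

definition fstar :: "(real \<Rightarrow> real) \<Rightarrow> real \<Rightarrow> ereal" where
  "fstar f t = (SUP x\<in>{0..}. ereal (t * x - f x))"

definition supp :: "'a::metric_space measure \<Rightarrow> 'a set" where
  "supp Q = {\<theta> \<in> space Q. \<forall>e>0. emeasure Q (ball \<theta> e \<inter> space Q) > 0}"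

definition assm_b ::
  "(real \<Rightarrow> real) \<Rightarrow> ('y \<Rightarrow> 'y \<Rightarrow> real) \<Rightarrow> ('a::metric_space \<Rightarrow> 'x \<Rightarrow> 'y) \<Rightarrow> ('x \<times> 'y) list
     \<Rightarrow> 'a measure \<Rightarrow> real \<Rightarrow> real \<Rightarrow> bool" where
  "assm_b f loss h z Q lam \<beta> \<longleftrightarrow>
     (\<forall>\<theta>\<in>supp Q. - (\<beta> + emp_risk loss h z \<theta>) / lam \<in> fdot f ` {0<..}
                 \<and> fdot_inv f (- (\<beta> + emp_risk loss h z \<theta>) / lam) > 0)
   \<and> integrable Q (\<lambda>\<theta>. fdot_inv f (- (\<beta> + emp_risk loss h z \<theta>) / lam))
   \<and> (\<integral>\<theta>. fdot_inv f (- (\<beta> + emp_risk loss h z \<theta>) / lam) \<partial>Q) = 1"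

definition adm_set ::
  "(real \<Rightarrow> real) \<Rightarrow> ('y \<Rightarrow> 'y \<Rightarrow> real) \<Rightarrow> ('a::metric_space \<Rightarrow> 'x \<Rightarrow> 'y) \<Rightarrow> ('x \<times> 'y) list
     \<Rightarrow> 'a measure \<Rightarrow> real set" where
  "adm_set f loss h z Q = {lam. 0 < lam \<and> (\<exists>\<beta>. assm_b f loss h z Q lam \<beta>)}"

definition norm_fun ::
  "(real \<Rightarrow> real) \<Rightarrow> ('y \<Rightarrow> 'y \<Rightarrow> real) \<Rightarrow> ('a::metric_space \<Rightarrow> 'x \<Rightarrow> 'y) \<Rightarrow> ('x \<times> 'y) list
     \<Rightarrow> 'a measure \<Rightarrow> real \<Rightarrow> real" where
  "norm_fun f loss h z Q lam = (THE \<beta>. assm_b f loss h z Q lam \<beta>)"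

text \<open>Since f^* \<ge> -f(0), the integral is taken as the (always defined) nonnegative integral of
  f^* + f(0), minus f(0) (Q is a probability measure).\<close>
definition objective ::
  "(real \<Rightarrow> real) \<Rightarrow> ('y \<Rightarrow> 'y \<Rightarrow> real) \<Rightarrow> ('a \<Rightarrow> 'x \<Rightarrow> 'y) \<Rightarrow> ('x \<times> 'y) list
     \<Rightarrow> 'a measure \<Rightarrow> real \<Rightarrow> real \<Rightarrow> ereal" where
  "objective f loss h z Q lam \<beta> =
     ereal lam * (enn2ereal (\<integral>\<^sup>+\<theta>. e2ennreal (fstar f (- (\<beta> + emp_risk loss h z \<theta>) / lam) + ereal (f 0)) \<partial>Q)
                - ereal (f 0)) + ereal \<beta>"

end

theory Submission
  imports Defs
begin

lemma tangent_ineq: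
  fixes f :: "real \<Rightarrow> real"
  assumes cv: "convex_on {0..} f" and d: "\<And>x. 0 < x \<Longrightarrow> f differentiable (at x)"
    and c: "0 < c" and y: "0 \<le> y"
  shows "f y - f c \<ge> fdot f c * (y - c)"
proof -
  have "(f has_field_derivative deriv f c) (at c)"
    using d[OF c] DERIV_deriv_iff_real_differentiable by blast
  then have "(f has_field_derivative deriv f c) (at c within {0..})"
    by (rule has_field_derivative_at_within)
  moreover have "c \<in> interior {0..}" using c by simp
  ultimately show ?thesis unfolding fdot_def
    using convex_on_imp_above_tangent[OF cv _ _ _] y by (simp add: is_interval_connected)
qed

lemma supp_AE:
  fixes Q :: "'a::euclidean_space measure"
  assumes sQ: "sets Q = sets (restrict_space borel M)"
  shows "AE \<theta> in Q. \<theta> \<in> supp Q"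
proof -
  have spQ: "space Q = M"
    using sets_eq_imp_space_eq[OF sQ] by (simp add: space_restrict_space)
  obtain B :: "'a set set" where Bc: "countable B" and Bo: "\<And>C. C \<in> B \<Longrightarrow> open C"
    and Bb: "\<And>S. open S \<Longrightarrow> \<exists>U. U \<subseteq> B \<and> S = \<Union>U"
    using univ_second_countable by blast
  have meas: "C \<inter> M \<in> sets Q" if "open C" for C
  proof -
    have "C \<in> sets borel" using that by simp
    then show ?thesis unfolding sQ sets_restrict_space by blast
  qed
  let ?I = "{C\<in>B. emeasure Q (C \<inter> M) = 0}"
  have N: "(\<Union>C\<in>?I. C \<inter> M) \<in> null_sets Q"
    by (rule null_sets_UN') (use Bc Bo meas in \<open>auto intro: countable_subset\<close>)
  show ?thesis
  proof (rule AE_I'[OF N], safe)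
    fix \<theta> assume th: "\<theta> \<in> space Q" "\<theta> \<notin> supp Q"
    then obtain e where e: "e > 0" "\<not> emeasure Q (ball \<theta> e \<inter> space Q) > 0"
      unfolding supp_def by auto
    then have z: "emeasure Q (ball \<theta> e \<inter> M) = 0" using spQ by (simp add: not_gr_zero)
    obtain U where U: "U \<subseteq> B" "ball \<theta> e = \<Union>U" using Bb[of "ball \<theta> e"] by auto
    have "\<theta> \<in> ball \<theta> e" using e by simp
    then obtain C where C: "C \<in> U" "\<theta> \<in> C" using U by auto
    have "C \<subseteq> ball \<theta> e" using U C by auto
    then have "emeasure Q (C \<inter> M) \<le> emeasure Q (ball \<theta> e \<inter> M)"
      by (intro emeasure_mono) (auto intro: meas)
    then have "emeasure Q (C \<inter> M) = 0" using z by simp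
    then show "\<theta> \<in> (\<Union>C\<in>?I. C \<inter> M)" using C U th spQ by auto
  qed
qed

lemma fdot_mono:
  fixes f :: "real \<Rightarrow> real"
  assumes cv: "convex_on {0..} f" and d: "\<And>x. 0 < x \<Longrightarrow> f differentiable (at x)"
    and x: "0 < x" and xy: "x \<le> y"
  shows "fdot f x \<le> fdot f y"
proof -
  have y: "0 < y" using x xy by simp
  have 1: "f y - f x \<ge> fdot f x * (y - x)" using tangent_ineq[OF cv d x] y by simp
  have 2: "f x - f y \<ge> fdot f y * (x - y)" using tangent_ineq[OF cv d y] x by simp
  from 1 2 have "(fdot f y - fdot f x) * (y - x) \<ge> 0" by (simp add: algebra_simps)
  then show ?thesis using xy
    by (cases "x = y") (auto simp: zero_le_mult_iff)
qed

lemma fdot_inv_props: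
  assumes "t \<in> fdot f ` {0<..}"
  shows "fdot_inv f t > 0" "fdot f (fdot_inv f t) = t"
  using assms inv_into_into[of t "fdot f" "{0<..}"] unfolding fdot_inv_def
  by (auto intro: f_inv_into_f)

lemma assm_b_le:
  fixes Q :: "'a::euclidean_space measure"
  assumes Qp: "prob_space Q" and sQ: "sets Q = sets (restrict_space borel M)"
    and cv: "convex_on {0..} f" and d: "\<And>x. 0 < x \<Longrightarrow> f differentiable (at x)"
    and lam: "0 < lam"
    and b1: "assm_b f loss h z Q lam b1" and b2: "assm_b f loss h z Q lam b2"
  shows "\<not> b1 < b2"
proof
  assume lt: "b1 < b2"
  define L where "L = emp_risk loss h z"
  define x1 where "x1 = (\<lambda>\<theta>. fdot_inv f (- (b1 + L \<theta>) / lam))"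
  define x2 where "x2 = (\<lambda>\<theta>. fdot_inv f (- (b2 + L \<theta>) / lam))"
  have i1: "integrable Q x1" "integral\<^sup>L Q x1 = 1" using b1 unfolding assm_b_def x1_def L_def by auto
  have i2: "integrable Q x2" "integral\<^sup>L Q x2 = 1" using b2 unfolding assm_b_def x2_def L_def by auto
  have gt: "AE \<theta> in Q. x1 \<theta> > x2 \<theta>"
    using supp_AE[OF sQ]
  proof eventually_elim
    case (elim \<theta>)
    let ?t1 = "- (b1 + L \<theta>) / lam" and ?t2 = "- (b2 + L \<theta>) / lam"
    have r1: "?t1 \<in> fdot f ` {0<..}" using b1 elim unfolding assm_b_def L_def by auto
    have r2: "?t2 \<in> fdot f ` {0<..}" using b2 elim unfolding assm_b_def L_def by auto
    have tl: "?t2 < ?t1" using lt lam by (simp add: divide_strict_right_mono)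
    show ?case
    proof (rule ccontr)
      assume "\<not> x2 \<theta> < x1 \<theta>"
      then have "fdot f (x1 \<theta>) \<le> fdot f (x2 \<theta>)"
        using fdot_mono[OF cv d, of "x1 \<theta>" "x2 \<theta>"] fdot_inv_props(1)[OF r1] unfolding x1_def x2_def by simp
      then show False using fdot_inv_props(2)[OF r1] fdot_inv_props(2)[OF r2] tl
        unfolding x1_def x2_def by simp
    qed
  qed
  have "integral\<^sup>L Q (\<lambda>\<theta>. x1 \<theta> - x2 \<theta>) = 0" using i1 i2 by simp
  moreover have "integrable Q (\<lambda>\<theta>. x1 \<theta> - x2 \<theta>)" using i1 i2 by simp
  moreover have "AE \<theta> in Q. 0 \<le> x1 \<theta> - x2 \<theta>" using gt by eventually_elim simp
  ultimately have "AE \<theta> in Q. x1 \<theta> - x2 \<theta> = 0" using integral_nonneg_eq_0_iff_AE by blast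
  with gt have "AE \<theta> in Q. False" by eventually_elim simp
  then show False using prob_space.AE_False[OF Qp] by simp
qed


theorem theorem2:
  fixes M :: "'a::euclidean_space set"
    and h :: "'a \<Rightarrow> 'x \<Rightarrow> 'y"
    and loss :: "'y \<Rightarrow> 'y \<Rightarrow> real"
    and z :: "('x \<times> 'y) list"
    and Q :: "'a measure"
    and f :: "real \<Rightarrow> real"
    and lam :: real
  assumes loss_nonneg: "\<And>y y'. loss y y' \<ge> 0"
    and loss_refl: "\<And>y. loss y y = 0"
    and Q_prob: "prob_space Q"
    and Q_borel: "sets Q = sets (restrict_space borel M)"
    and L_meas: "(\<lambda>\<theta>. emp_risk loss h z \<theta>) \<in> borel_measurable Q"
    and lam_pos: "0 < lam"
    and f_convex: "convex_on {0..} f"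
    and f_one: "f 1 = 0"
    and f_zero: "(f \<longlongrightarrow> f 0) (at_right 0)"
    and a_strict: "strictly_convex_on {0..} f"
    and a_diff: "\<And>x. 0 < x \<Longrightarrow> f differentiable (at x)"
    and b: "lam \<in> adm_set f loss h z Q"
  shows "\<forall>\<beta>. objective f loss h z Q lam (norm_fun f loss h z Q lam) \<le> objective f loss h z Q lam \<beta>"
proof
  fix \<beta> :: real
  obtain b0 where b0: "assm_b f loss h z Q lam b0" using b unfolding adm_set_def by auto
  have uniq: "bb = b0" if "assm_b f loss h z Q lam bb" for bb
    using assm_b_le[OF Q_prob Q_borel f_convex a_diff lam_pos that b0]
      assm_b_le[OF Q_prob Q_borel f_convex a_diff lam_pos b0 that] by linarith
  have N: "norm_fun f loss h z Q lam = b0"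
    unfolding norm_fun_def using b0 uniq by (rule the_equality)
  define L where "L = emp_risk loss h z"
  have L_nn: "L \<theta> \<ge> 0" for \<theta>
    unfolding L_def emp_risk_def by (intro mult_nonneg_nonneg sum_nonneg loss_nonneg) auto
  define t where "t = (\<lambda>\<theta>. - (b0 + L \<theta>) / lam)"
  define x where "x = (\<lambda>\<theta>. fdot_inv f (t \<theta>))"
  define F where "F = (\<lambda>y::real. if y \<in> {0<..} then f y else 0)"
  define G where "G = (\<lambda>\<theta>. t \<theta> * x \<theta> - F (x \<theta>) + f 0)"
  define d1 where "d1 = fdot f 1"
  define Bd where "Bd = (\<lambda>\<theta>. (- b0 / lam - d1) * x \<theta> + (d1 + f 0))"
  have xint: "integrable Q x" "integral\<^sup>L Q x = 1"
    using b0 unfolding assm_b_def x_def t_def L_def by auto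
  have supp: "AE \<theta> in Q. \<theta> \<in> supp Q" by (rule supp_AE[OF Q_borel])
  have onsupp: "t \<theta> \<in> fdot f ` {0<..}" "x \<theta> > 0" "fdot f (x \<theta>) = t \<theta>" "F (x \<theta>) = f (x \<theta>)"
    if "\<theta> \<in> supp Q" for \<theta>
  proof -
    show r: "t \<theta> \<in> fdot f ` {0<..}" using b0 that unfolding assm_b_def t_def L_def by auto
    show "x \<theta> > 0" "fdot f (x \<theta>) = t \<theta>" using fdot_inv_props[OF r] unfolding x_def by auto
    then show "F (x \<theta>) = f (x \<theta>)" unfolding F_def by simp
  qed
  have xmeas: "x \<in> borel_measurable Q" using xint by auto
  have tmeas: "t \<in> borel_measurable Q" using L_meas unfolding t_def L_def by measurable
  have fcont: "continuous_on {0<..} f"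
    by (intro continuous_at_imp_continuous_on ballI differentiable_imp_continuous_within a_diff) auto
  have Fmeas: "F \<in> borel_measurable borel"
    unfolding F_def by (rule borel_measurable_continuous_on_if) (auto intro: fcont)
  have FX: "(\<lambda>\<theta>. F (x \<theta>)) \<in> borel_measurable Q"
    using measurable_compose[OF xmeas Fmeas] by (simp add: o_def)
  have Gmeas: "G \<in> borel_measurable Q" unfolding G_def using tmeas xmeas FX by measurable
  have Gbd: "0 \<le> G \<theta> \<and> G \<theta> \<le> Bd \<theta>" if "\<theta> \<in> supp Q" for \<theta>
  proof -
    note o = onsupp[OF that]
    have t0: "f 0 - f (x \<theta>) \<ge> t \<theta> * (0 - x \<theta>)"
      using tangent_ineq[OF f_convex a_diff o(2), of 0] o(3) by simp
    have t1: "f (x \<theta>) - f 1 \<ge> d1 * (x \<theta> - 1)"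
      using tangent_ineq[OF f_convex a_diff, of 1 "x \<theta>"] o(2) unfolding d1_def by simp
    have "t \<theta> \<le> - b0 / lam" unfolding t_def using L_nn[of \<theta>] lam_pos
      by (simp add: field_simps)
    then have t2: "t \<theta> * x \<theta> \<le> (- b0 / lam) * x \<theta>" using o(2) mult_right_mono[of "t \<theta>" "- b0 / lam" "x \<theta>"] by simp
    show ?thesis unfolding G_def Bd_def o(4) using t0 t1 t2 f_one by (simp add: algebra_simps)
  qed
  have Gint: "integrable Q G"
  proof (rule Bochner_Integration.integrable_bound[OF _ Gmeas])
    show "integrable Q Bd" unfolding Bd_def
      using xint(1) prob_space.finite_measure[OF Q_prob] by (intro Bochner_Integration.integrable_add integrable_mult_right) (auto simp: finite_measure.integrable_const)
    show "AE \<theta> in Q. norm (G \<theta>) \<le> norm (Bd \<theta>)" using supp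
      by eventually_elim (use Gbd in force)
  qed
  have Gnn: "AE \<theta> in Q. 0 \<le> G \<theta>" using supp by eventually_elim (use Gbd in blast)
  define a where "a = integral\<^sup>L Q G"
  have a_nn: "0 \<le> a" unfolding a_def using Gnn by (rule integral_nonneg_AE)
  have fstar0: "fstar f (t \<theta>) = ereal (t \<theta> * x \<theta> - f (x \<theta>))" if "\<theta> \<in> supp Q" for \<theta>
  proof -
    note o = onsupp[OF that]
    show ?thesis unfolding fstar_def
    proof (rule antisym)
      show "(SUP y\<in>{0..}. ereal (t \<theta> * y - f y)) \<le> ereal (t \<theta> * x \<theta> - f (x \<theta>))"
      proof (rule SUP_least)
        fix y :: real assume "y \<in> {0..}"
        then have "f y - f (x \<theta>) \<ge> t \<theta> * (y - x \<theta>)"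
          using tangent_ineq[OF f_convex a_diff o(2), of y] o(3) by simp
        then show "ereal (t \<theta> * y - f y) \<le> ereal (t \<theta> * x \<theta> - f (x \<theta>))"
          by (simp add: algebra_simps)
      qed
      show "ereal (t \<theta> * x \<theta> - f (x \<theta>)) \<le> (SUP y\<in>{0..}. ereal (t \<theta> * y - f y))"
        by (rule SUP_upper) (use o(2) in simp)
    qed
  qed
  have I0: "(\<integral>\<^sup>+\<theta>. e2ennreal (fstar f (- (b0 + emp_risk loss h z \<theta>) / lam) + ereal (f 0)) \<partial>Q)
      = ennreal a"
  proof -
    have "(\<integral>\<^sup>+\<theta>. e2ennreal (fstar f (- (b0 + emp_risk loss h z \<theta>) / lam) + ereal (f 0)) \<partial>Q)
        = (\<integral>\<^sup>+\<theta>. ennreal (G \<theta>) \<partial>Q)"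
    proof (rule nn_integral_cong_AE)
      show "AE \<theta> in Q. e2ennreal (fstar f (- (b0 + emp_risk loss h z \<theta>) / lam) + ereal (f 0)) = ennreal (G \<theta>)"
        using supp
      proof eventually_elim
        case (elim \<theta>)
        show ?case using fstar0[OF elim] onsupp(4)[OF elim]
          unfolding G_def t_def L_def by simp
      qed
    qed
    also have "\<dots> = ennreal a" unfolding a_def using Gint Gnn
      by (rule nn_integral_eq_integral)
    finally show ?thesis .
  qed
  define c where "c = (b0 - \<beta>) / lam"
  define H where "H = (\<lambda>\<theta>. G \<theta> + c * x \<theta>)"
  have Hint: "integrable Q H" unfolding H_def using Gint xint by auto
  have Hi: "integral\<^sup>L Q H = a + c" unfolding H_def a_def using Gint xint by simp
  define I where "I = (\<integral>\<^sup>+\<theta>. e2ennreal (fstar f (- (\<beta> + emp_risk loss h z \<theta>) / lam) + ereal (f 0)) \<partial>Q)"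
  define r where "r = integral\<^sup>L Q (\<lambda>\<theta>. max 0 (H \<theta>))"
  have r_ge: "a + c \<le> r" unfolding r_def Hi[symmetric]
    by (intro integral_mono Hint) (auto intro: Hint)
  have r_nn: "0 \<le> r" unfolding r_def by (rule integral_nonneg_AE) auto
  have "ennreal r = (\<integral>\<^sup>+\<theta>. ennreal (max 0 (H \<theta>)) \<partial>Q)"
    unfolding r_def by (intro nn_integral_eq_integral[symmetric]) (auto intro: Hint)
  also have "\<dots> = (\<integral>\<^sup>+\<theta>. ennreal (H \<theta>) \<partial>Q)" by (simp add: ennreal_max_0)
  also have "\<dots> \<le> I" unfolding I_def
  proof (rule nn_integral_mono_AE)
   show "AE \<theta> in Q. ennreal (H \<theta>) \<le> e2ennreal (fstar f (- (\<beta> + emp_risk loss h z \<theta>) / lam) + ereal (f 0))"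
   using supp
   proof eventually_elim
    case (elim \<theta>)
    note o = onsupp[OF elim]
    have tt: "- (\<beta> + emp_risk loss h z \<theta>) / lam = t \<theta> + c"
      unfolding t_def c_def L_def using lam_pos by (simp add: field_simps)
    have "ereal ((t \<theta> + c) * x \<theta> - f (x \<theta>)) \<le> fstar f (t \<theta> + c)"
      unfolding fstar_def by (rule SUP_upper) (use o(2) in simp)
    then have "ereal (H \<theta>) \<le> fstar f (- (\<beta> + emp_risk loss h z \<theta>) / lam) + ereal (f 0)"
      unfolding tt H_def G_def o(4)
      by (cases "fstar f (t \<theta> + c)") (auto simp: algebra_simps)
    then show ?case using e2ennreal_mono by fastforce
   qed
  qed
  finally have rI: "ennreal r \<le> I" .
  then have E: "ereal r \<le> enn2ereal I" using r_nn by (simp add: less_eq_ennreal.rep_eq)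
  have obj0: "objective f loss h z Q lam (norm_fun f loss h z Q lam)
      = ereal lam * (ereal a - ereal (f 0)) + ereal b0"
    unfolding objective_def N I0 using a_nn by simp
  have objb: "objective f loss h z Q lam \<beta> = ereal lam * (enn2ereal I - ereal (f 0)) + ereal \<beta>"
    unfolding objective_def I_def by simp
  show "objective f loss h z Q lam (norm_fun f loss h z Q lam) \<le> objective f loss h z Q lam \<beta>"
    unfolding obj0 objb
  proof (cases "enn2ereal I")
    case (real e)
    have "e \<ge> a + c" using E r_ge real by simp
    then have "lam * (a - f 0) + b0 \<le> lam * (e - f 0) + \<beta>"
      using lam_pos unfolding c_def by (simp add: field_simps)
    then show "ereal lam * (ereal a - ereal (f 0)) + ereal b0 \<le> ereal lam * (enn2ereal I - ereal (f 0)) + ereal \<beta>"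
      using real by simp
  next
    case PInf
    then show "ereal lam * (ereal a - ereal (f 0)) + ereal b0 \<le> ereal lam * (enn2ereal I - ereal (f 0)) + ereal \<beta>"
      using lam_pos by simp
  next
    case MInf
    then show "ereal lam * (ereal a - ereal (f 0)) + ereal b0 \<le> ereal lam * (enn2ereal I - ereal (f 0)) + ereal \<beta>"
      using enn2ereal_nonneg[of I] by simp
  qed
qed

end
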